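(* Let $\vec{p}=(p_1,\dots,p_n)$ with $1<\vec{p}<\infty$ and $-\frac{1}{n}\sum_{i=1}^n\frac{1}{p_i}<\lambda<0$. There is a constant $C>0$ such that for every $b\in\mathfrak{C}^{\vec{p},\lambda}(\mathbb{R}^n)$, all $j,k\in\mathbb{Z}$ and all $y\in\mathbb{R}^n$, $$|b(y)-b_{B_k}|\le|b(y)-b_{B_j}|+C\max\{|B_k|^{\lambda},|B_j|^{\lambda}\}\,\|b\|_{\mathfrak{C}^{\vec{p},\lambda}(\mathbb{R}^n)}.$$
   Context: $B_k=\{x\in\mathbb{R}^n:|x|\le2^k\}$ for $k\in\mathbb{Z}$, and $b_{B}=\frac1{|B|}\int_B b$. For an exponent vector $\vec{p}$, $\|\cdot\|_{L^{\vec p}}$ denotes the mixed Lebesgue norm $\|f\|_{L^{\vec{p}}}=\Big(\int_{\mathbb{R}}\cdots\Big(\int_{\mathbb{R}}|f(x_1,\dots,x_n)|^{p_1}dx_1\Big)^{p_2/p_1}\cdots dx_n\Big)^{1/p_n}$. The mixed central Campanato space $\mathfrak{C}^{\vec{p},\lambda}(\mathbb{R}^n)$ consists of measurable $f$ with $\|f\|_{\mathfrak{C}^{\vec{p},\lambda}}=\sup_{r>0}\frac{\|(f-f_{B(0,r)})\chi_{B(0,r)}\|_{L^{\vec p}}}{|B(0,r)|^{\lambda}\|\chi_{B(0,r)}\|_{L^{\vec p}}}<\infty$, where $\chi_B$ is the indicator of $B$. *)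

theory Defs
  imports "HOL-Analysis.Analysis"
begin

text \<open>Points of R^n are represented as functions nat => real that are extensional on {..<n},
  i.e. elements of PiE {..<n} (%_. UNIV); coordinate x_{i+1} of the paper is x i.\<close>

definition Rn :: "nat \<Rightarrow> (nat \<Rightarrow> real) set" where
  "Rn n = PiE {..<n} (\<lambda>_. UNIV)"

definition lebn :: "nat \<Rightarrow> (nat \<Rightarrow> real) measure" where
  "lebn n = PiM {..<n} (\<lambda>_. lborel)"

definition enorm :: "nat \<Rightarrow> (nat \<Rightarrow> real) \<Rightarrow> real" where
  "enorm n x = sqrt (\<Sum>i<n. (x i)\<^sup>2)"

definition ballR :: "nat \<Rightarrow> real \<Rightarrow> (nat \<Rightarrow> real) set" where
  "ballR n r = {x \<in> Rn n. enorm n x \<le> r}"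

definition Bk :: "nat \<Rightarrow> int \<Rightarrow> (nat \<Rightarrow> real) set" where
  "Bk n k = ballR n (2 powr real_of_int k)"

definition vol :: "nat \<Rightarrow> (nat \<Rightarrow> real) set \<Rightarrow> real" where
  "vol n B = measure (lebn n) B"

definition avg :: "nat \<Rightarrow> ((nat \<Rightarrow> real) \<Rightarrow> real) \<Rightarrow> (nat \<Rightarrow> real) set \<Rightarrow> real" where
  "avg n b B = (1 / vol n B) * (\<integral>x\<in>B. b x \<partial>lebn n)"

definition enn_powr :: "ennreal \<Rightarrow> real \<Rightarrow> ennreal" where
  "enn_powr e a = (if e = \<infinity> then \<infinity> else ennreal (enn2real e powr a))"

text \<open>Iterated mixed integration: stage 0 is |f x|; stage i+1 takes the L^{p_{i+1}} norm
  in the coordinate x_{i+1} (index i).\<close>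
fun mixed_aux :: "(nat \<Rightarrow> real) \<Rightarrow> ((nat \<Rightarrow> real) \<Rightarrow> real) \<Rightarrow> nat \<Rightarrow> (nat \<Rightarrow> real) \<Rightarrow> ennreal" where
  "mixed_aux p f 0 x = ennreal \<bar>f x\<bar>"
| "mixed_aux p f (Suc i) x =
     enn_powr (\<integral>\<^sup>+ t. enn_powr (mixed_aux p f i (x(i := t))) (p i) \<partial>lborel) (1 / p i)"

definition mixed_norm :: "nat \<Rightarrow> (nat \<Rightarrow> real) \<Rightarrow> ((nat \<Rightarrow> real) \<Rightarrow> real) \<Rightarrow> ennreal" where
  "mixed_norm n p f = mixed_aux p f n (\<lambda>_. undefined)"

definition campanato_norm :: "nat \<Rightarrow> (nat \<Rightarrow> real) \<Rightarrow> real \<Rightarrow> ((nat \<Rightarrow> real) \<Rightarrow> real) \<Rightarrow> ennreal" where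
  "campanato_norm n p lam f =
     (SUP r \<in> {0<..}. mixed_norm n p (\<lambda>x. (f x - avg n f (ballR n r)) * indicator (ballR n r) x)
        / (ennreal (vol n (ballR n r) powr lam) * mixed_norm n p (indicator (ballR n r))))"

definition campanato :: "nat \<Rightarrow> (nat \<Rightarrow> real) \<Rightarrow> real \<Rightarrow> ((nat \<Rightarrow> real) \<Rightarrow> real) set" where
  "campanato n p lam = {f. f \<in> borel_measurable (lebn n) \<and> campanato_norm n p lam f < \<infinity>}"

end

theory Submission
  imports Defs
begin


lemma psf: "product_sigma_finite (\<lambda>_::nat. lborel)"
  by (simp add: product_sigma_finite_def lborel.sigma_finite_measure_axioms)

lemma space_lebn: "space (lebn n) = Rn n"
  by (simp add: lebn_def Rn_def space_PiM)

lemma sets_lebn: "sets (lebn n) = sets (PiM {..<n} (\<lambda>_. lborel))"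
  by (simp add: lebn_def)

lemma upd_in_Rn: "x \<in> Rn n \<Longrightarrow> i < n \<Longrightarrow> x(i:=t) \<in> Rn n"
  by (auto simp: Rn_def PiE_def extensional_def)

lemma undef_Rn: "(\<lambda>_. undefined) \<in> Rn n"
  by (auto simp: Rn_def PiE_def extensional_def)

lemma upd_meas2: "i < n \<Longrightarrow> (\<lambda>(x,t). x(i:=t)) \<in> measurable (lebn n \<Otimes>\<^sub>M lborel) (lebn n)"
proof -
  assume i: "i < n"
  have "(\<lambda>xt. (\<lambda>l. ((fst xt)(i:=snd xt)) l)) \<in> measurable (lebn n \<Otimes>\<^sub>M lborel) (PiM {..<n} (\<lambda>_. lborel))"
  proof (rule measurable_PiM_single')
    fix l assume l: "l \<in> {..<n}"
    show "(\<lambda>xt. ((fst xt)(i:=snd xt)) l) \<in> measurable (lebn n \<Otimes>\<^sub>M lborel) lborel"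
    proof (cases "l = i")
      case True then show ?thesis by simp
    next
      case False
      have "(\<lambda>x. x l) \<in> measurable (lebn n) lborel"
        unfolding lebn_def using l by (rule measurable_component_singleton)
      then show ?thesis using False by simp
    qed
  next
    show "(\<lambda>xt l. ((fst xt)(i:=snd xt)) l) \<in> space (lebn n \<Otimes>\<^sub>M lborel) \<rightarrow> (\<Pi>\<^sub>E l\<in>{..<n}. space lborel)"
      using i by (auto simp: space_pair_measure space_lebn Rn_def PiE_def extensional_def)
  qed
  moreover have eq: "(\<lambda>(x, t). x(i := t)) = (\<lambda>xt l. if l = i then snd xt else fst xt l)"
    by (auto simp: fun_eq_iff)
  ultimately show ?thesis unfolding lebn_def by (subst eq) simp
qed

lemma upd_meas: "x \<in> Rn n \<Longrightarrow> i < n \<Longrightarrow> (\<lambda>t. x(i:=t)) \<in> measurable lborel (lebn n)"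
proof -
  assume x: "x \<in> Rn n" and i: "i < n"
  have "(\<lambda>t. (x, t)) \<in> measurable lborel (lebn n \<Otimes>\<^sub>M lborel)"
    using x by (auto simp: space_lebn intro!: measurable_Pair)
  from measurable_compose[OF this upd_meas2[OF i]] show ?thesis by simp
qed

lemma enn_powr_meas: "(\<lambda>e. enn_powr e a) \<in> borel_measurable borel"
  unfolding enn_powr_def by measurable

lemma enn_powr_meas'[measurable]: "f \<in> borel_measurable M \<Longrightarrow> (\<lambda>x. enn_powr (f x) a) \<in> borel_measurable M"
  using measurable_comp[OF _ enn_powr_meas] by (simp add: comp_def)



lemma mixed_meas:
  assumes f: "f \<in> borel_measurable (lebn n)"
  shows "i \<le> n \<Longrightarrow> (\<lambda>x. mixed_aux p f i x) \<in> borel_measurable (lebn n)"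
proof (induction i)
  case 0
  then show ?case using f by simp
next
  case (Suc i)
  then have i: "i < n" and IH: "(\<lambda>x. mixed_aux p f i x) \<in> borel_measurable (lebn n)" by auto
  have "(\<lambda>xt. mixed_aux p f i ((\<lambda>(x,t). x(i:=t)) xt)) \<in> borel_measurable (lebn n \<Otimes>\<^sub>M lborel)"
    using measurable_compose[OF upd_meas2[OF i] IH] .
  then have "case_prod (\<lambda>x t. enn_powr (mixed_aux p f i (x(i:=t))) (p i)) \<in> borel_measurable (lebn n \<Otimes>\<^sub>M lborel)"
    by (simp add: case_prod_beta')
  then have "(\<lambda>x. \<integral>\<^sup>+ t. enn_powr (mixed_aux p f i (x(i:=t))) (p i) \<partial>lborel) \<in> borel_measurable (lebn n)"
    by (rule lborel.borel_measurable_nn_integral)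
  then show ?case by simp
qed



lemma young_pt:
  fixes h s p :: real
  assumes "0 \<le> h" "0 < s" "1 < p"
  shows "h \<le> h powr p / (p * s powr (p-1)) + s * (1 - 1/p)"
proof -
  define q where "q = p / (p - 1)"
  have q1: "q > 1" using assms by (simp add: q_def)
  have pq: "1/p + 1/q = 1" using assms by (simp add: q_def field_simps)
  have "h / s * 1 \<le> (h/s) powr p / p + 1 powr q / q"
    using Youngs_inequality[of p q "h/s" 1] assms q1 pq by simp
  also have "1 powr q / q = 1 - 1/p" using pq by simp
  also have "(h/s) powr p = h powr p / s powr p" using assms by (simp add: powr_divide)
  finally have *: "h / s \<le> h powr p / s powr p / p + (1 - 1/p)" by simp
  have sp: "s powr p = s * s powr (p-1)"
  proof -
    have "s powr p = s powr (1 + (p-1))" by simp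
    also have "\<dots> = s * s powr (p-1)" using assms by (simp only: powr_add powr_one)
    finally show ?thesis .
  qed
  have "h = s * (h / s)" using assms by simp
  also have "\<dots> \<le> s * (h powr p / s powr p / p + (1 - 1/p))"
    using * assms by (intro mult_left_mono) auto
  also have "\<dots> = h powr p / (p * s powr (p-1)) + s * (1 - 1/p)"
    using assms by (simp add: sp field_simps)
  finally show ?thesis .
qed

lemma enn_aux: "0\<le>(X::real) \<Longrightarrow> 0\<le>Y \<Longrightarrow> 0\<le>Z \<Longrightarrow> ennreal (X*Y+Z) = ennreal X * ennreal Y + ennreal Z"
  by (metis ennreal_plus ennreal_mult mult_nonneg_nonneg)

lemma young_enn:
  fixes h :: ennreal and s p :: real
  assumes "0 < s" "1 < p"
  shows "indicator I t * h \<le> ennreal (1/(p * s powr (p-1))) * enn_powr h p + ennreal (s*(1-1/p)) * indicator I t"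
proof (cases "t \<in> I")
  case False then show ?thesis by simp
next
  case True
  show ?thesis
  proof (cases "h = \<infinity>")
    case True
    have "ennreal (1/(p * s powr (p-1))) * enn_powr h p = \<infinity>"
      using True assms by (simp add: enn_powr_def ennreal_mult_top)
    then show ?thesis by simp
  next
    case False
    then obtain r where r: "h = ennreal r" "0 \<le> r" by (cases h) auto
    have "r \<le> r powr p / (p * s powr (p-1)) + s * (1 - 1/p)" using young_pt[OF r(2) assms] .
    also have "\<dots> = 1/(p * s powr (p-1)) * r powr p + s * (1-1/p)" by simp
    finally have "ennreal r \<le> ennreal (1/(p * s powr (p-1)) * r powr p + s * (1-1/p))"
      by (rule ennreal_leI)
    also have "\<dots> = ennreal (1/(p * s powr (p-1))) * ennreal (r powr p) + ennreal (s*(1-1/p))"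
      using assms r by (intro enn_aux) auto
    finally show ?thesis using True r by (simp add: enn_powr_def)
  qed
qed



lemma holder_arith:
  fixes a L p :: real
  assumes "0 < a" "0 < L" "1 < p"
    and s_def: "s = (a/L) powr (1/p)"
  shows "1/(p * s powr (p-1)) * a + s*(1-1/p) * L = L powr (1 - 1/p) * a powr (1/p)"
proof -
  define u where "u = a powr (1/p)"
  define w where "w = L powr (1/p)"
  have u: "u > 0" "a = u powr p" using assms by (auto simp: u_def powr_powr)
  have w: "w > 0" "L = w powr p" using assms by (auto simp: w_def powr_powr)
  have s: "s = u / w" using assms by (simp add: s_def u_def w_def powr_divide)
  have up: "u powr p = u * u powr (p-1)"
  proof -
    have "u powr p = u powr (1 + (p-1))" by simp
    also have "\<dots> = u * u powr (p-1)" using u by (simp only: powr_add powr_one)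
    finally show ?thesis .
  qed
  have wp: "w powr p = w * w powr (p-1)"
  proof -
    have "w powr p = w powr (1 + (p-1))" by simp
    also have "\<dots> = w * w powr (p-1)" using w by (simp only: powr_add powr_one)
    finally show ?thesis .
  qed
  have sp: "s powr (p-1) = u powr (p-1) / w powr (p-1)" using u w by (simp add: s powr_divide)
  have lhs: "1/(p * s powr (p-1)) * a + s*(1-1/p) * L = u * w powr (p-1)"
    using u w assms(1-3) by (simp add: sp up wp s field_simps powr_divide)
  have pp: "p * (1 - 1/p) = p - 1" using assms by (simp add: field_simps)
  have "L powr (1 - 1/p) = w powr (p-1)"
    using w assms(1-3) by (simp add: powr_powr pp)
  then show ?thesis using lhs by (simp add: u_def)
qed



lemma enn_aux2: "0\<le>(X::real) \<Longrightarrow> 0\<le>Y \<Longrightarrow> 0\<le>Z \<Longrightarrow> 0\<le>W \<Longrightarrow>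
   ennreal X * ennreal Y + ennreal Z * ennreal W = ennreal (X*Y+Z*W)"
  by (metis ennreal_plus ennreal_mult mult_nonneg_nonneg)

lemma holder1:
  assumes h: "h \<in> borel_measurable lborel" and p: "1 < p" and R: "0 < R"
  shows "(\<integral>\<^sup>+ t. indicator {-R..R} t * h t \<partial>lborel)
     \<le> ennreal ((2*R) powr (1-1/p)) * enn_powr (\<integral>\<^sup>+ t. enn_powr (h t) p \<partial>lborel) (1/p)"
    (is "?L \<le> _")
proof -
  define A where "A = (\<integral>\<^sup>+ t. enn_powr (h t) p \<partial>lborel)"
  have key: "?L \<le> ennreal (1/(p * s powr (p-1))) * A + ennreal (s*(1-1/p)) * ennreal (2*R)"
    if s: "0 < s" for s
  proof -
    have "?L \<le> (\<integral>\<^sup>+ t. ennreal (1/(p * s powr (p-1))) * enn_powr (h t) p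
                  + ennreal (s*(1-1/p)) * indicator {-R..R} t \<partial>lborel)"
      using young_enn[OF s p] by (intro nn_integral_mono) auto
    also have "\<dots> = ennreal (1/(p * s powr (p-1))) * A + ennreal (s*(1-1/p)) * emeasure lborel {-R..R}"
      using h by (simp add: nn_integral_add nn_integral_cmult A_def)
    also have "emeasure lborel {-R..R} = ennreal (2*R)" using R by simp
    finally show ?thesis .
  qed
  show ?thesis
  proof (cases "A = \<infinity>")
    case True
    have "(2*R) powr (1-1/p) > 0" using R by simp
    then have "ennreal ((2*R) powr (1-1/p)) * enn_powr A (1/p) = \<infinity>"
      using True by (simp add: enn_powr_def ennreal_mult_top)
    then show ?thesis by (simp add: A_def)
  next
    case False
    then obtain a where a: "A = ennreal a" "0 \<le> a" by (cases A) auto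
    show ?thesis
    proof (cases "a = 0")
      case True
      have "?L \<le> 0"
      proof (rule ennreal_le_epsilon)
        fix e :: real assume e: "0 < e"
        define s where "s = e / ((1-1/p) * (2*R))"
        have s: "0 < s" using e p R by (simp add: s_def)
        have "?L \<le> ennreal (s*(1-1/p)) * ennreal (2*R)"
          using key[OF s] a True by simp
        also have "\<dots> = ennreal (s*(1-1/p) * (2*R))"
          using s p R by (simp add: ennreal_mult)
        also have "s*(1-1/p) * (2*R) = e"
          using p R by (simp add: s_def field_simps)
        finally show "?L \<le> 0 + ennreal e" by simp
      qed
      then show ?thesis by simp
    next
      case False
      then have a0: "0 < a" using a by simp
      define s where "s = (a/(2*R)) powr (1/p)"
      have s: "0 < s" using a0 R by (simp add: s_def)
      have "?L \<le> ennreal (1/(p * s powr (p-1))) * ennreal a + ennreal (s*(1-1/p)) * ennreal (2*R)"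
        using key[OF s] a by simp
      also have "\<dots> = ennreal (1/(p * s powr (p-1)) * a + s*(1-1/p) * (2*R))"
        using s p R a by (intro enn_aux2) auto
      also have "\<dots> = ennreal ((2*R) powr (1 - 1/p) * a powr (1/p))"
        using holder_arith[OF a0 _ p s_def] R by simp
      also have "\<dots> = ennreal ((2*R) powr (1-1/p)) * enn_powr A (1/p)"
        using a by (simp add: enn_powr_def ennreal_mult)
      finally show ?thesis by (simp add: A_def)
    qed
  qed
qed



definition Hf :: "((nat\<Rightarrow>real) \<Rightarrow> ennreal) \<Rightarrow> nat \<Rightarrow> (nat\<Rightarrow>real) \<Rightarrow> ennreal" where
  "Hf F i x = (\<integral>\<^sup>+ z. F (\<lambda>l. if l < i then z l else x l) \<partial>(PiM {..<i} (\<lambda>_. lborel)))"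

lemma upd_meas3:
  assumes x: "x \<in> Rn n" and i: "i \<le> n"
  shows "(\<lambda>z. (\<lambda>l. if l < i then z l else x l)) \<in> measurable (PiM {..<i} (\<lambda>_. lborel)) (lebn n)"
  unfolding lebn_def
proof (rule measurable_PiM_single')
  fix l assume l: "l \<in> {..<n}"
  show "(\<lambda>z. if l < i then z l else x l) \<in> measurable (PiM {..<i} (\<lambda>_. lborel)) lborel"
  proof (cases "l < i")
    case True
    then show ?thesis by (simp add: measurable_component_singleton)
  qed simp
next
  show "(\<lambda>z l. if l < i then z l else x l) \<in> space (PiM {..<i} (\<lambda>_. lborel)) \<rightarrow> (\<Pi>\<^sub>E l\<in>{..<n}. space lborel)"
    using x i by (auto simp: Rn_def PiE_def extensional_def)
qed

lemma H0: "Hf F 0 x = F x"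
  by (simp add: Hf_def PiM_empty nn_integral_count_space_finite)

lemma HSuc:
  assumes F: "F \<in> borel_measurable (lebn n)" and i: "i < n" and x: "x \<in> Rn n"
  shows "Hf F (Suc i) x = (\<integral>\<^sup>+ t. Hf F i (x(i:=t)) \<partial>lborel)"
proof -
  interpret product_sigma_finite "\<lambda>_::nat. lborel" by (rule psf)
  have ins: "{..<Suc i} = insert i {..<i}" by auto
  have m: "(\<lambda>z. F (\<lambda>l. if l < Suc i then z l else x l)) \<in> borel_measurable (PiM (insert i {..<i}) (\<lambda>_. lborel))"
    using measurable_compose[OF upd_meas3[OF x, of "Suc i"] F] i by (simp add: ins)
  have "Hf F (Suc i) x = (\<integral>\<^sup>+ z. F (\<lambda>l. if l < Suc i then z l else x l) \<partial>(PiM (insert i {..<i}) (\<lambda>_. lborel)))"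
    by (simp add: Hf_def ins)
  also have "\<dots> = (\<integral>\<^sup>+ t. (\<integral>\<^sup>+ z. F (\<lambda>l. if l < Suc i then (z(i:=t)) l else x l) \<partial>(PiM {..<i} (\<lambda>_. lborel))) \<partial>lborel)"
    by (rule product_nn_integral_insert_rev[OF _ _ m]) auto
  also have "\<dots> = (\<integral>\<^sup>+ t. Hf F i (x(i:=t)) \<partial>lborel)"
  proof (rule nn_integral_cong)
    fix t
    have "\<And>z. (\<lambda>l. if l < Suc i then (z(i:=t)) l else x l) = (\<lambda>l. if l < i then z l else (x(i:=t)) l)"
      by (auto simp: fun_eq_iff)
    then show "(\<integral>\<^sup>+ z. F (\<lambda>l. if l < Suc i then (z(i:=t)) l else x l) \<partial>(PiM {..<i} (\<lambda>_. lborel))) = Hf F i (x(i:=t))"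
      by (simp add: Hf_def)
  qed
  finally show ?thesis .
qed

lemma Hn:
  shows "Hf F n (\<lambda>_. undefined) = (\<integral>\<^sup>+ x. F x \<partial>lebn n)"
  unfolding Hf_def lebn_def
proof (rule nn_integral_cong)
  fix z :: "nat \<Rightarrow> real" assume "z \<in> space (PiM {..<n} (\<lambda>_. lborel))"
  then have "(\<lambda>l. if l < n then z l else undefined) = z"
    by (auto simp: space_PiM PiE_def extensional_def fun_eq_iff)
  then show "F (\<lambda>l. if l < n then z l else undefined) = F z" by simp
qed



lemma chain:
  assumes f: "f \<in> borel_measurable (lebn n)" and R: "0 < R" and p: "\<forall>i<n. 1 < p i"
    and supp: "\<And>y l. l < n \<Longrightarrow> \<bar>y l\<bar> > R \<Longrightarrow> f y = 0"
  shows "i \<le> n \<Longrightarrow> x \<in> Rn n \<Longrightarrow>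
    Hf (\<lambda>y. ennreal \<bar>f y\<bar>) i x \<le> ennreal (\<Prod>l<i. (2*R) powr (1 - 1/p l)) * mixed_aux p f i x"
proof (induction i arbitrary: x)
  case 0
  then show ?case by (simp add: H0)
next
  case (Suc i)
  have i: "i < n" and x: "x \<in> Rn n" using Suc.prems by auto
  define c where "c = (\<Prod>l<i. (2*R) powr (1 - 1/p l))"
  have c: "0 \<le> c" unfolding c_def by (simp add: prod_nonneg)
  have F: "(\<lambda>y. ennreal \<bar>f y\<bar>) \<in> borel_measurable (lebn n)" using f by measurable
  have hm: "(\<lambda>t. mixed_aux p f i (x(i:=t))) \<in> borel_measurable lborel"
    using measurable_compose[OF upd_meas[OF x i] mixed_meas[OF f, of i]] i by simp
  have "Hf (\<lambda>y. ennreal \<bar>f y\<bar>) (Suc i) x = (\<integral>\<^sup>+ t. Hf (\<lambda>y. ennreal \<bar>f y\<bar>) i (x(i:=t)) \<partial>lborel)"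
    by (rule HSuc[OF F i x])
  also have "\<dots> \<le> (\<integral>\<^sup>+ t. ennreal c * (indicator {-R..R} t * mixed_aux p f i (x(i:=t))) \<partial>lborel)"
  proof (rule nn_integral_mono)
    fix t
    show "Hf (\<lambda>y. ennreal \<bar>f y\<bar>) i (x(i:=t)) \<le> ennreal c * (indicator {-R..R} t * mixed_aux p f i (x(i:=t)))"
    proof (cases "t \<in> {-R..R}")
      case True
      have ih: "Hf (\<lambda>y. ennreal \<bar>f y\<bar>) i (x(i:=t)) \<le> ennreal c * mixed_aux p f i (x(i:=t))"
        unfolding c_def using i by (intro Suc.IH[OF _ upd_in_Rn[OF x i]]) simp
      then show ?thesis using True by simp
    next
      case False
      then have "\<bar>t\<bar> > R" by auto
      then have "Hf (\<lambda>y. ennreal \<bar>f y\<bar>) i (x(i:=t)) = 0"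
        unfolding Hf_def using supp[of i] i by simp
      then show ?thesis by simp
    qed
  qed
  also have "\<dots> = ennreal c * (\<integral>\<^sup>+ t. indicator {-R..R} t * mixed_aux p f i (x(i:=t)) \<partial>lborel)"
    using hm by (intro nn_integral_cmult borel_measurable_times_ennreal) auto
  also have "\<dots> \<le> ennreal c * (ennreal ((2*R) powr (1-1/p i)) *
        enn_powr (\<integral>\<^sup>+ t. enn_powr (mixed_aux p f i (x(i:=t))) (p i) \<partial>lborel) (1/p i))"
    using holder1[OF hm _ R, of "p i"] p i by (intro mult_left_mono) auto
  also have "\<dots> = ennreal (\<Prod>l<Suc i. (2*R) powr (1 - 1/p l)) * mixed_aux p f (Suc i) x"
    using c by (simp add: c_def ennreal_mult mult.assoc)
  finally show ?case .
qed



lemma enn_powr_ennreal: "0 \<le> x \<Longrightarrow> enn_powr (ennreal x) e = ennreal (x powr e)"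
  by (simp add: enn_powr_def)

lemma enn_powr_zero[simp]: "enn_powr 0 e = 0"
  by (simp add: enn_powr_def)

lemma enn_powr_mono: "a \<le> b \<Longrightarrow> 0 \<le> e \<Longrightarrow> enn_powr a e \<le> enn_powr b e"
proof (cases "b = \<infinity>")
  case True then show ?thesis by (simp add: enn_powr_def)
next
  case False
  assume ab: "a \<le> b" and e: "0 \<le> e"
  obtain y where y: "b = ennreal y" "0 \<le> y" using False by (cases b) auto
  obtain x where x: "a = ennreal x" "0 \<le> x" using ab y by (cases a) (auto simp: top_unique)
  have "x \<le> y" using ab x y by simp
  then show ?thesis using x y e by (simp add: enn_powr_ennreal powr_mono2)
qed

lemma ind_bound:
  assumes R: "0 < R" and p: "\<forall>i<n. 1 < p i"
    and B: "\<And>y l. y \<in> B \<Longrightarrow> l < n \<Longrightarrow> \<bar>y l\<bar> \<le> R"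
  shows "i \<le> n \<Longrightarrow> mixed_aux p (indicator B) i x \<le> ennreal (\<Prod>l<i. (2*R) powr (1/p l))
     \<and> ((\<exists>l. i \<le> l \<and> l < n \<and> \<bar>x l\<bar> > R) \<longrightarrow> mixed_aux p (indicator B) i x = 0)"
proof (induction i arbitrary: x)
  case 0
  have "\<bar>indicator B x\<bar> \<le> (1::real)" by (simp add: indicator_def)
  moreover have "(\<exists>l. l < n \<and> \<bar>x l\<bar> > R) \<longrightarrow> x \<notin> B" using B by force
  ultimately show ?case by simp
next
  case (Suc i)
  have i: "i < n" using Suc.prems by simp
  define c where "c = (\<Prod>l<i. (2*R) powr (1/p l))"
  have c: "0 < c" unfolding c_def using R by (simp add: prod_pos)
  have pi: "1 < p i" using p i by simp
  have IH: "\<And>x. mixed_aux p (indicator B) i x \<le> ennreal c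
     \<and> ((\<exists>l. i \<le> l \<and> l < n \<and> \<bar>x l\<bar> > R) \<longrightarrow> mixed_aux p (indicator B) i x = 0)"
    unfolding c_def using i by (intro Suc.IH) simp
  have "(\<integral>\<^sup>+ t. enn_powr (mixed_aux p (indicator B) i (x(i:=t))) (p i) \<partial>lborel)
      \<le> (\<integral>\<^sup>+ t. ennreal (c powr p i) * indicator {-R..R} t \<partial>lborel)"
  proof (rule nn_integral_mono)
    fix t
    show "enn_powr (mixed_aux p (indicator B) i (x(i:=t))) (p i) \<le> ennreal (c powr p i) * indicator {-R..R} t"
    proof (cases "t \<in> {-R..R}")
      case True
      have "enn_powr (mixed_aux p (indicator B) i (x(i:=t))) (p i) \<le> enn_powr (ennreal c) (p i)"
        using IH[of "x(i:=t)"] pi by (intro enn_powr_mono) auto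
      then show ?thesis using True c by (simp add: enn_powr_ennreal)
    next
      case False
      then have "\<bar>(x(i:=t)) i\<bar> > R" by auto
      then have "mixed_aux p (indicator B) i (x(i:=t)) = 0" using IH[of "x(i:=t)"] i by blast
      then show ?thesis by simp
    qed
  qed
  also have "\<dots> = ennreal (c powr p i) * ennreal (2*R)"
    using R by (subst nn_integral_cmult) auto
  also have "\<dots> = ennreal (c powr p i * (2*R))" using c R by (simp add: ennreal_mult)
  finally have I: "(\<integral>\<^sup>+ t. enn_powr (mixed_aux p (indicator B) i (x(i:=t))) (p i) \<partial>lborel)
      \<le> ennreal (c powr p i * (2*R))" .
  have "mixed_aux p (indicator B) (Suc i) x \<le> enn_powr (ennreal (c powr p i * (2*R))) (1/p i)"
    using I pi by (simp add: enn_powr_mono)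
  also have "\<dots> = ennreal ((c powr p i * (2*R)) powr (1/p i))" using c R by (simp add: enn_powr_ennreal)
  also have "(c powr p i * (2*R)) powr (1/p i) = c * (2*R) powr (1/p i)"
  proof -
    have "(c powr p i * (2*R)) powr (1/p i) = (c powr p i) powr (1/p i) * (2*R) powr (1/p i)"
      using c R by (simp add: powr_mult)
    also have "(c powr p i) powr (1/p i) = c powr (p i * (1/p i))" by (rule powr_powr)
    also have "p i * (1/p i) = 1" using pi by simp
    finally show ?thesis using c by simp
  qed
  also have "c * (2*R) powr (1/p i) = (\<Prod>l<Suc i. (2*R) powr (1/p l))" by (simp add: c_def)
  finally have bnd: "mixed_aux p (indicator B) (Suc i) x \<le> ennreal (\<Prod>l<Suc i. (2*R) powr (1/p l))" .
  have zero: "mixed_aux p (indicator B) (Suc i) x = 0" if ex: "\<exists>l. Suc i \<le> l \<and> l < n \<and> \<bar>x l\<bar> > R"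
  proof -
    obtain l where l: "Suc i \<le> l" "l < n" "\<bar>x l\<bar> > R" using ex by blast
    have "\<And>t. mixed_aux p (indicator B) i (x(i:=t)) = 0"
    proof -
      fix t
      have "i \<le> l \<and> l < n \<and> \<bar>(x(i:=t)) l\<bar> > R" using l by simp
      then show "mixed_aux p (indicator B) i (x(i:=t)) = 0" using IH[of "x(i:=t)"] by blast
    qed
    then show ?thesis by simp
  qed
  show ?case using bnd zero by blast
qed



lemma coord_le: "l < n \<Longrightarrow> \<bar>x l\<bar> \<le> enorm n x"
proof -
  assume l: "l < n"
  have "(x l)\<^sup>2 \<le> (\<Sum>i<n. (x i)\<^sup>2)"
    using l by (intro member_le_sum) auto
  then have "sqrt ((x l)\<^sup>2) \<le> sqrt (\<Sum>i<n. (x i)\<^sup>2)" by (rule real_sqrt_le_mono)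
  then show ?thesis by (simp add: enorm_def)
qed

lemma ball_coord: "y \<in> ballR n r \<Longrightarrow> l < n \<Longrightarrow> \<bar>y l\<bar> \<le> r"
  using coord_le[of l n y] by (auto simp: ballR_def)

lemma enorm_meas: "(\<lambda>x. enorm n x) \<in> borel_measurable (lebn n)"
proof -
  have "(\<lambda>x. \<Sum>i<n. (x i)\<^sup>2) \<in> borel_measurable (lebn n)"
    unfolding lebn_def
    by (intro borel_measurable_sum borel_measurable_power measurable_component_singleton) auto
  from measurable_compose[OF this borel_measurable_sqrt] show ?thesis by (simp add: enorm_def)
qed

lemma ball_sets: "ballR n r \<in> sets (lebn n)"
proof -
  have "ballR n r = {x \<in> space (lebn n). enorm n x \<le> r}"
    by (simp add: ballR_def space_lebn)
  then show ?thesis using enorm_meas[of n] unfolding borel_measurable_iff_le by simp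
qed

definition cube :: "nat \<Rightarrow> real \<Rightarrow> (nat \<Rightarrow> real) set" where
  "cube n a = PiE {..<n} (\<lambda>_. {-a..a})"

lemma cube_emeasure: "0 \<le> a \<Longrightarrow> emeasure (lebn n) (cube n a) = ennreal ((2*a)^n)"
proof -
  assume a: "0 \<le> a"
  interpret product_sigma_finite "\<lambda>_::nat. lborel" by (rule psf)
  have "emeasure (lebn n) (cube n a) = (\<Prod>i<n. emeasure lborel {-a..a})"
    unfolding lebn_def cube_def by (rule emeasure_PiM) auto
  also have "\<dots> = (\<Prod>i<n. ennreal (2*a))" using a by simp
  also have "\<dots> = ennreal ((2*a)^n)" using a by (simp add: ennreal_power)
  finally show ?thesis .
qed

lemma ball_sub_cube: "ballR n r \<subseteq> cube n r"
proof
  fix y assume y: "y \<in> ballR n r"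
  then have "\<forall>l<n. \<bar>y l\<bar> \<le> r" using ball_coord by blast
  then show "y \<in> cube n r" using y by (auto simp: cube_def ballR_def Rn_def PiE_def abs_le_iff)
qed

lemma cube_sub_ball:
  assumes n: "1 \<le> n" and r: "0 \<le> r"
  shows "cube n (r / sqrt n) \<subseteq> ballR n r"
proof
  fix y assume y: "y \<in> cube n (r / sqrt n)"
  have "(\<Sum>i<n. (y i)\<^sup>2) \<le> (\<Sum>i<n. (r / sqrt n)\<^sup>2)"
  proof (rule sum_mono)
    fix i assume "i \<in> {..<n}"
    then have "\<bar>y i\<bar> \<le> r / sqrt n" using y by (auto simp: cube_def PiE_def Pi_def abs_le_iff)
    then have "\<bar>y i\<bar> \<le> \<bar>r / sqrt n\<bar>" using r by simp
    then show "(y i)\<^sup>2 \<le> (r / sqrt n)\<^sup>2" by (simp only: abs_le_square_iff)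
  qed
  also have "\<dots> = r\<^sup>2" using n by (simp add: power_divide)
  finally have "sqrt (\<Sum>i<n. (y i)\<^sup>2) \<le> sqrt (r\<^sup>2)" by (rule real_sqrt_le_mono)
  then have "sqrt (\<Sum>i<n. (y i)\<^sup>2) \<le> r" using r by simp
  moreover have "y \<in> Rn n" using y by (auto simp: cube_def Rn_def PiE_def)
  ultimately show "y \<in> ballR n r" by (simp add: ballR_def enorm_def)
qed

lemma vol_bounds:
  assumes n: "1 \<le> n" and r: "0 < r"
  shows "(2 * r / sqrt n)^n \<le> vol n (ballR n r)" "vol n (ballR n r) \<le> (2*r)^n"
proof -
  have cs: "cube n a \<in> sets (lebn n)" for a
    unfolding cube_def lebn_def by (rule sets_PiM_I_finite) auto
  have "emeasure (lebn n) (ballR n r) \<le> emeasure (lebn n) (cube n r)"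
    by (rule emeasure_mono[OF ball_sub_cube cs])
  also have "\<dots> = ennreal ((2*r)^n)" using r by (intro cube_emeasure) simp
  finally have fin: "emeasure (lebn n) (ballR n r) \<le> ennreal ((2*r)^n)" .
  then have fin': "emeasure (lebn n) (ballR n r) \<noteq> \<infinity>" by (auto simp: top_unique)
  have eq: "emeasure (lebn n) (ballR n r) = ennreal (vol n (ballR n r))"
    using fin' by (simp add: vol_def emeasure_eq_ennreal_measure)
  show "vol n (ballR n r) \<le> (2*r)^n"
    using fin r by (simp add: eq ennreal_le_iff)
  have "ennreal ((2 * (r / sqrt n))^n) = emeasure (lebn n) (cube n (r / sqrt n))"
    using r by (intro cube_emeasure[symmetric]) simp
  also have "\<dots> \<le> emeasure (lebn n) (ballR n r)"
    using r by (intro emeasure_mono[OF cube_sub_ball[OF n] ball_sets]) simp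
  finally have "ennreal ((2 * (r / sqrt n))^n) \<le> emeasure (lebn n) (ballR n r)" .
  moreover have "0 \<le> vol n (ballR n r)" by (simp add: vol_def)
  ultimately show "(2 * r / sqrt n)^n \<le> vol n (ballR n r)"
    using r by (simp add: eq ennreal_le_iff)
qed



lemma ediv: "(x::ennreal) / y \<le> N \<Longrightarrow> N < top \<Longrightarrow> y < top \<Longrightarrow> x \<le> N * y"
proof -
  assume h: "x / y \<le> N" and N: "N < top" and y: "y < top"
  show ?thesis
  proof (cases "y = 0")
    case True
    then show ?thesis using h N by (cases "x = 0") (auto simp: top_unique)
  next
    case False
    have "x = (x / y) * y" using False y by (simp add: ennreal_divide_times)
    also have "\<dots> \<le> N * y" using h by (rule mult_right_mono) simp
    finally show ?thesis .
  qed
qed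

lemma prod_c1c2:
  fixes r :: real
  assumes r: "0 < r" and p: "\<forall>i<n. 1 < p i"
  shows "(\<Prod>l<n. (2*r) powr (1 - 1/p l)) * (\<Prod>l<n. (2*r) powr (1/p l)) = (2*r)^n"
proof -
  have "(\<Prod>l<n. (2*r) powr (1 - 1/p l)) * (\<Prod>l<n. (2*r) powr (1/p l))
      = (\<Prod>l<n. (2*r) powr (1 - 1/p l) * (2*r) powr (1/p l))"
    by (simp add: prod.distrib)
  also have "\<dots> = (\<Prod>l<n. 2*r)"
  proof (rule prod.cong)
    fix l
    have "(2*r) powr (1 - 1/p l) * (2*r) powr (1/p l) = (2*r) powr (1 - 1/p l + 1/p l)"
      by (rule powr_add[symmetric])
    also have "1 - 1/p l + 1/p l = 1" by simp
    finally show "(2*r) powr (1 - 1/p l) * (2*r) powr (1/p l) = 2*r" using r by simp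
  qed simp
  also have "\<dots> = (2*r)^n" by simp
  finally show ?thesis .
qed

lemma key:
  assumes n: "1 \<le> n" and p: "\<forall>i<n. 1 < p i" and b: "b \<in> campanato n p lam" and r: "0 < r"
  shows "(\<integral>\<^sup>+ x. ennreal (\<bar>b x - avg n b (ballR n r)\<bar> * indicator (ballR n r) x) \<partial>lebn n)
     \<le> ennreal (enn2real (campanato_norm n p lam b) * vol n (ballR n r) powr lam * (2*r)^n)"
proof -
  define B where "B = ballR n r"
  define c where "c = avg n b B"
  define N where "N = enn2real (campanato_norm n p lam b)"
  define f where "f = (\<lambda>x. (b x - c) * indicator B x)"
  define c1 where "c1 = (\<Prod>l<n. (2*r) powr (1 - 1/p l))"
  define c2 where "c2 = (\<Prod>l<n. (2*r) powr (1/p l))"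
  have c1: "0 \<le> c1" unfolding c1_def by (simp add: prod_nonneg)
  have c2: "0 \<le> c2" unfolding c2_def by (simp add: prod_nonneg)
  have bm: "b \<in> borel_measurable (lebn n)" and bn: "campanato_norm n p lam b < \<infinity>"
    using b by (auto simp: campanato_def)
  have Nn: "campanato_norm n p lam b = ennreal N" "0 \<le> N"
    using bn by (auto simp: N_def less_top ennreal_enn2real)
  have Bs: "B \<in> sets (lebn n)" unfolding B_def by (rule ball_sets)
  have fm: "f \<in> borel_measurable (lebn n)" unfolding f_def using bm Bs by measurable
  have supp: "f y = 0" if "l < n" "\<bar>y l\<bar> > r" for y l
  proof -
    have "y \<notin> B" using ball_coord[of y n r l] that by (auto simp: B_def)
    then show ?thesis by (simp add: f_def)
  qed
  have "Hf (\<lambda>y. ennreal \<bar>f y\<bar>) n (\<lambda>_. undefined) \<le> ennreal c1 * mixed_aux p f n (\<lambda>_. undefined)"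
    unfolding c1_def
  proof (rule chain[OF fm r p])
    show "\<And>y l. l < n \<Longrightarrow> \<bar>y l\<bar> > r \<Longrightarrow> f y = 0" by (rule supp)
  qed (use undef_Rn in auto)
  moreover have "Hf (\<lambda>y. ennreal \<bar>f y\<bar>) n (\<lambda>_. undefined) = (\<integral>\<^sup>+ x. ennreal (\<bar>b x - c\<bar> * indicator B x) \<partial>lebn n)"
    by (simp add: Hn f_def abs_mult)
  ultimately have I1: "(\<integral>\<^sup>+ x. ennreal (\<bar>b x - c\<bar> * indicator B x) \<partial>lebn n) \<le> ennreal c1 * mixed_norm n p f"
    by (simp add: mixed_norm_def)
  have I2: "mixed_norm n p (indicator B) \<le> ennreal c2"
    unfolding mixed_norm_def c2_def
    using ind_bound[OF r p, of B n "\<lambda>_. undefined"] ball_coord[of _ n r] by (auto simp: B_def)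
  have "mixed_norm n p f / (ennreal (vol n B powr lam) * mixed_norm n p (indicator B)) \<le> campanato_norm n p lam b"
    unfolding campanato_norm_def f_def c_def B_def using r by (intro SUP_upper) auto
  moreover have yfin: "ennreal (vol n B powr lam) * mixed_norm n p (indicator B) < top"
  proof -
    have "ennreal (vol n B powr lam) * mixed_norm n p (indicator B) \<le> ennreal (vol n B powr lam) * ennreal c2"
      using I2 by (intro mult_left_mono) auto
    also have "\<dots> = ennreal (vol n B powr lam * c2)" using c2 by (simp add: ennreal_mult)
    also have "\<dots> < top" by simp
    finally show ?thesis .
  qed
  ultimately have "mixed_norm n p f \<le> ennreal N * (ennreal (vol n B powr lam) * mixed_norm n p (indicator B))"
    using Nn by (intro ediv) auto
  also have "\<dots> \<le> ennreal N * (ennreal (vol n B powr lam) * ennreal c2)"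
    using I2 by (intro mult_left_mono) auto
  finally have I3: "mixed_norm n p f \<le> ennreal (N * vol n B powr lam * c2)"
    using Nn c2 by (simp add: ennreal_mult mult.assoc)
  have "(\<integral>\<^sup>+ x. ennreal (\<bar>b x - c\<bar> * indicator B x) \<partial>lebn n) \<le> ennreal c1 * ennreal (N * vol n B powr lam * c2)"
    using I1 I3 by (meson mult_left_mono order_trans zero_le)
  also have "\<dots> = ennreal (N * vol n B powr lam * (c1 * c2))"
  proof -
    have "ennreal c1 * ennreal (N * vol n B powr lam * c2) = ennreal (c1 * (N * vol n B powr lam * c2))"
      using c1 c2 Nn by (intro ennreal_mult[symmetric]) auto
    then show ?thesis by (simp add: mult_ac)
  qed
  also have "c1 * c2 = (2*r)^n" unfolding c1_def c2_def by (rule prod_c1c2[OF r p])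
  finally show ?thesis by (simp add: B_def c_def N_def)
qed



lemma ball_fin: "0 < r \<Longrightarrow> emeasure (lebn n) (ballR n r) < \<infinity>"
proof -
  assume r: "0 < r"
  have cs: "cube n r \<in> sets (lebn n)"
    unfolding cube_def lebn_def by (rule sets_PiM_I_finite) auto
  have "emeasure (lebn n) (ballR n r) \<le> emeasure (lebn n) (cube n r)"
    by (rule emeasure_mono[OF ball_sub_cube cs])
  also have "\<dots> = ennreal ((2*r)^n)" using r by (intro cube_emeasure) simp
  also have "\<dots> < \<infinity>" by simp
  finally show ?thesis .
qed

lemma step:
  assumes n: "1 \<le> n" and p: "\<forall>i<n. 1 < p i" and b: "b \<in> campanato n p lam" and r: "0 < r"
  shows "\<bar>avg n b (ballR n r) - avg n b (ballR n (2*r))\<bar>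
     \<le> (1 / vol n (ballR n r)) * (enn2real (campanato_norm n p lam b) * vol n (ballR n (2*r)) powr lam * (2*(2*r))^n)"
proof -
  define B where "B = ballR n r"
  define B' where "B' = ballR n (2*r)"
  define c where "c = avg n b B'"
  define K where "K = enn2real (campanato_norm n p lam b) * vol n B' powr lam * (2*(2*r))^n"
  define v where "v = vol n B"
  have v: "0 < v"
  proof -
    have "0 < (2 * r / sqrt n)^n" using r n by simp
    also have "\<dots> \<le> v" unfolding v_def B_def by (rule vol_bounds(1)[OF n r])
    finally show ?thesis .
  qed
  have K: "0 \<le> K" unfolding K_def using r by simp
  have bm: "b \<in> borel_measurable (lebn n)" using b by (simp add: campanato_def)
  have Bs: "B \<in> sets (lebn n)" unfolding B_def by (rule ball_sets)
  have BB': "B \<subseteq> B'" unfolding B_def B'_def ballR_def using r by auto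
  have kb: "(\<integral>\<^sup>+ x. ennreal (\<bar>b x - c\<bar> * indicator B' x) \<partial>lebn n) \<le> ennreal K"
    using key[OF n p b, of "2*r"] r by (simp add: K_def B'_def c_def)
  have nb: "(\<integral>\<^sup>+ x. ennreal (norm (indicator B x * (b x - c))) \<partial>lebn n) \<le> ennreal K"
  proof -
    have "(\<integral>\<^sup>+ x. ennreal (norm (indicator B x * (b x - c))) \<partial>lebn n)
        \<le> (\<integral>\<^sup>+ x. ennreal (\<bar>b x - c\<bar> * indicator B' x) \<partial>lebn n)"
      using BB' by (intro nn_integral_mono) (auto simp: indicator_def abs_mult)
    then show ?thesis using kb by (rule order_trans)
  qed
  have int1: "integrable (lebn n) (\<lambda>x. indicator B x * (b x - c))"
  proof (rule integrableI_bounded)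
    show "(\<lambda>x. indicator B x * (b x - c)) \<in> borel_measurable (lebn n)" using bm Bs by measurable
    show "(\<integral>\<^sup>+ x. ennreal (norm (indicator B x * (b x - c))) \<partial>lebn n) < \<infinity>"
      using nb by (rule le_less_trans) simp
  qed
  have int2: "integrable (lebn n) (\<lambda>x. c * indicator B x)"
    using integrable_real_indicator[OF Bs] ball_fin[OF r] by (simp add: B_def)
  have "(\<integral>x\<in>B. b x \<partial>lebn n) = (\<integral>x. indicator B x * (b x - c) + c * indicator B x \<partial>lebn n)"
    by (simp add: set_lebesgue_integral_def algebra_simps)
  also have "\<dots> = (\<integral>x. indicator B x * (b x - c) \<partial>lebn n) + c * v"
    using int1 int2 Bs by (simp add: v_def vol_def)
  finally have si: "(\<integral>x\<in>B. b x \<partial>lebn n) = (\<integral>x. indicator B x * (b x - c) \<partial>lebn n) + c * v" .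
  have avgB: "avg n b B - c = (1/v) * (\<integral>x. indicator B x * (b x - c) \<partial>lebn n)"
    using v by (simp add: avg_def si v_def field_simps)
  have "ennreal \<bar>\<integral>x. indicator B x * (b x - c) \<partial>lebn n\<bar> \<le> (\<integral>\<^sup>+ x. ennreal (norm (indicator B x * (b x - c))) \<partial>lebn n)"
    using integral_norm_bound_ennreal[OF int1] by simp
  also have "\<dots> \<le> ennreal K" by (rule nb)
  finally have "\<bar>\<integral>x. indicator B x * (b x - c) \<partial>lebn n\<bar> \<le> K" using K by (simp add: ennreal_le_iff)
  then have "\<bar>avg n b B - c\<bar> \<le> (1/v) * K"
    using v by (simp add: avgB abs_mult divide_right_mono)
  then show ?thesis by (simp add: B_def B'_def c_def v_def K_def)
qed



lemma pow_powr: "0 < y \<Longrightarrow> (y ^ n) powr lam = y powr (real n * lam)"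
 by (simp add: powr_realpow[symmetric] powr_powr)

lemma alg1:
 fixes s N lam :: real
 assumes s: "0 < s" and n: "1 \<le> n"
 shows "1 / (2 * s / sqrt n)^n * (N * ((2 * (2 * s) / sqrt n)^n) powr lam * (2 * (2 * s))^n)
 = N * ((2 * sqrt n)^n * (4 / sqrt n) powr (n * lam)) * s powr (n * lam)"
proof -
 have sn: "0 < sqrt (real n)" using n by simp
 have e0: "2 * (2 * s) / sqrt n = 4 / sqrt n * s" by simp
 have "((2 * (2 * s) / sqrt n)^n) powr lam = (4 / sqrt n * s) powr (n * lam)"
 unfolding e0 using s sn by (intro pow_powr) simp
 also have "\<dots> = (4 / sqrt n) powr (n * lam) * s powr (n * lam)"
 by (rule powr_mult)
 finally have e1: "((2 * (2 * s) / sqrt n)^n) powr lam = (4 / sqrt n) powr (n * lam) * s powr (n * lam)" .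
 have e2: "(2 * (2 * s))^n / (2 * s / sqrt n)^n = (2 * sqrt n)^n"
 proof -
 have "(2 * (2 * s))^n / (2 * s / sqrt n)^n = ((2 * (2 * s)) / (2 * s / sqrt n))^n" by (rule power_divide[symmetric])
 also have "(2 * (2 * s)) / (2 * s / sqrt n) = 2 * sqrt n" using s sn by (simp add: field_simps)
 finally show ?thesis .
 qed
 have "1 / (2 * s / sqrt n)^n * (N * ((2 * (2 * s) / sqrt n)^n) powr lam * (2 * (2 * s))^n)
 = N * ((2 * (2 * s))^n / (2 * s / sqrt n)^n) * ((2 * (2 * s) / sqrt n)^n) powr lam" by simp
 also have "\<dots> = N * (2 * sqrt n)^n * ((4 / sqrt n) powr (n * lam) * s powr (n * lam))"
 by (simp only: e1 e2)
 also have "\<dots> = N * ((2 * sqrt n)^n * (4 / sqrt n) powr (n * lam)) * s powr (n * lam)"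
 by (simp only: mult_ac)
 finally show ?thesis .
qed

lemma Bk_succ: "Bk n (i+1) = ballR n (2 * (2 powr real_of_int i))"
proof -
 have "(2::real) powr real_of_int (i+1) = 2 powr (real_of_int i + 1)" by simp
 also have "\<dots> = 2 * 2 powr real_of_int i" by (simp add: powr_add)
 finally show ?thesis by (simp add: Bk_def)
qed

lemma term_bound:
 assumes n: "1 \<le> n" and p: "\<forall>i<n. 1 < p i" and b: "b \<in> campanato n p lam" and lam: "lam < 0"
 shows "\<bar>avg n b (Bk n i) - avg n b (Bk n (i+1))\<bar>
 \<le> enn2real (campanato_norm n p lam b) * ((2 * sqrt n)^n * (4 / sqrt n) powr (n * lam)) * (2 powr real_of_int i) powr (n * lam)"
proof -
 define s where "s = (2::real) powr real_of_int i"
 define N where "N = enn2real (campanato_norm n p lam b)"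
 have s: "0 < s" by (simp add: s_def)
 have N: "0 \<le> N" by (simp add: N_def)
 have sn: "0 < sqrt (real n)" using n by simp
 have lo1: "(2 * s / sqrt n)^n \<le> vol n (ballR n s)" by (rule vol_bounds(1)[OF n s])
 have lo2: "(2 * (2 * s) / sqrt n)^n \<le> vol n (ballR n (2 * s))" using vol_bounds(1)[OF n, of "2 * s"] s by simp
 have pos1: "0 < (2 * s / sqrt n)^n" using s sn by simp
 have pos2: "0 < (2 * (2 * s) / sqrt n)^n" using s sn by simp
 have "\<bar>avg n b (ballR n s) - avg n b (ballR n (2 * s))\<bar>
 \<le> (1 / vol n (ballR n s)) * (N * vol n (ballR n (2 * s)) powr lam * (2 * (2 * s))^n)"
 using step[OF n p b s] by (simp add: N_def)
 also have "\<dots> \<le> (1 / (2 * s / sqrt n)^n) * (N * ((2 * (2 * s) / sqrt n)^n) powr lam * (2 * (2 * s))^n)"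
 proof (rule mult_mono)
 show "1 / vol n (ballR n s) \<le> 1 / (2 * s / sqrt n)^n"
 using lo1 pos1 by (intro divide_left_mono) auto
 show "N * vol n (ballR n (2 * s)) powr lam * (2 * (2 * s))^n \<le> N * ((2 * (2 * s) / sqrt n)^n) powr lam * (2 * (2 * s))^n"
 using lo2 pos2 lam N s by (intro mult_right_mono mult_left_mono powr_mono2') auto
 qed (use pos1 N s in auto)
 also have "\<dots> = N * ((2 * sqrt n)^n * (4 / sqrt n) powr (n * lam)) * s powr (n * lam)"
 by (rule alg1[OF s n])
 finally show ?thesis unfolding Bk_succ by (simp add: s_def N_def Bk_def)
qed



lemma sig_succ: "((2::real) powr real_of_int (i+1)) powr x = 2 powr x * (2 powr real_of_int i) powr x"
proof -
  have "(2::real) powr real_of_int (i+1) = 2 * 2 powr real_of_int i" by (simp add: powr_add)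
  then show ?thesis by (simp add: powr_mult)
qed

lemma q_lt1: "1 \<le> n \<Longrightarrow> lam < 0 \<Longrightarrow> (2::real) powr (real n * lam) < 1"
proof -
  assume n: "1 \<le> n" and lam: "lam < 0"
  have "real n * lam < 0" using n lam by (simp add: mult_pos_neg)
  then have "(2::real) powr (real n * lam) < 2 powr 0" by (intro powr_less_mono) auto
  then show ?thesis by simp
qed

lemma tele:
  assumes n: "1 \<le> n" and p: "\<forall>i<n. 1 < p i" and b: "b \<in> campanato n p lam" and lam: "lam < 0"
  defines "T \<equiv> (2 * sqrt n)^n * (4 / sqrt n) powr (n * lam)"
  defines "q \<equiv> (2::real) powr (n * lam)"
  defines "N \<equiv> enn2real (campanato_norm n p lam b)"
  shows "\<bar>avg n b (Bk n j) - avg n b (Bk n (j + int d))\<bar> \<le> N * (T / (1 - q)) * (2 powr real_of_int j) powr (n * lam)"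
proof (induction d arbitrary: j)
  case 0
  have "0 \<le> T" unfolding T_def by simp
  moreover have "q < 1" unfolding q_def using q_lt1[OF n lam] .
  moreover have "0 \<le> N" unfolding N_def by simp
  ultimately show ?case by simp
next
  case (Suc d)
  define D where "D = T / (1 - q)"
  have q1: "q < 1" unfolding q_def using q_lt1[OF n lam] .
  have TD: "T + D * q = D" unfolding D_def using q1 by (simp add: field_simps)
  have e: "j + int (Suc d) = (j + 1) + int d" by simp
  have "\<bar>avg n b (Bk n j) - avg n b (Bk n (j + int (Suc d)))\<bar>
     \<le> \<bar>avg n b (Bk n j) - avg n b (Bk n (j + 1))\<bar> + \<bar>avg n b (Bk n (j+1)) - avg n b (Bk n ((j + 1) + int d))\<bar>"
    unfolding e by simp
  also have "\<dots> \<le> N * T * (2 powr real_of_int j) powr (n * lam) + N * D * (2 powr real_of_int (j+1)) powr (n * lam)"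
    using term_bound[OF n p b lam, of j] Suc.IH[of "j+1"] by (simp add: N_def T_def D_def)
  also have "(2 powr real_of_int (j+1)) powr (n * lam) = q * (2 powr real_of_int j) powr (n * lam)"
    unfolding q_def by (rule sig_succ)
  also have "N * T * (2 powr real_of_int j) powr (n * lam) + N * D * (q * (2 powr real_of_int j) powr (n * lam))
     = N * (T + D * q) * (2 powr real_of_int j) powr (n * lam)"
    by (simp add: algebra_simps)
  also have "\<dots> = N * D * (2 powr real_of_int j) powr (n * lam)" by (simp add: TD)
  finally show ?case by (simp add: D_def)
qed

lemma sig_vol:
  assumes n: "1 \<le> n" and lam: "lam < 0"
  shows "(2 powr real_of_int j) powr (n * lam) \<le> vol n (Bk n j) powr lam / 2 powr (n * lam)"
proof -
  define s where "s = (2::real) powr real_of_int j"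
  have s: "0 < s" by (simp add: s_def)
  have v: "0 < vol n (Bk n j)"
  proof -
    have "0 < (2 * s / sqrt n)^n" using s n by simp
    also have "\<dots> \<le> vol n (Bk n j)" unfolding Bk_def s_def by (rule vol_bounds(1)[OF n]) simp
    finally show ?thesis .
  qed
  have "vol n (Bk n j) \<le> (2 * s)^n" unfolding Bk_def s_def by (rule vol_bounds(2)[OF n]) simp
  then have "((2 * s)^n) powr lam \<le> vol n (Bk n j) powr lam"
    using v lam by (intro powr_mono2') auto
  moreover have "((2 * s)^n) powr lam = 2 powr (n * lam) * s powr (n * lam)"
    using s by (simp add: pow_powr powr_mult)
  ultimately have "2 powr (n * lam) * s powr (n * lam) \<le> vol n (Bk n j) powr lam" by simp
  then show ?thesis by (simp add: s_def field_simps)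
qed



lemma diff_bound:
  assumes n: "1 \<le> n" and p: "\<forall>i<n. 1 < p i" and b: "b \<in> campanato n p lam" and lam: "lam < 0"
    and jk: "j \<le> k"
  shows "\<bar>avg n b (Bk n j) - avg n b (Bk n k)\<bar>
    \<le> ((2 * sqrt n)^n * (4 / sqrt n) powr (n * lam)) / (1 - 2 powr (n * lam)) / 2 powr (n * lam)
       * vol n (Bk n j) powr lam * enn2real (campanato_norm n p lam b)"
proof -
  define T where "T = (2 * sqrt n)^n * (4 / sqrt n) powr (n * lam)"
  define q where "q = (2::real) powr (n * lam)"
  define N where "N = enn2real (campanato_norm n p lam b)"
  have q1: "q < 1" unfolding q_def using q_lt1[OF n lam] .
  have T: "0 \<le> T" unfolding T_def by simp
  have N: "0 \<le> N" unfolding N_def by simp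
  have D: "0 \<le> T / (1 - q)" using T q1 by simp
  have k: "k = j + int (nat (k - j))" using jk by simp
  have "\<bar>avg n b (Bk n j) - avg n b (Bk n k)\<bar> \<le> N * (T / (1 - q)) * (2 powr real_of_int j) powr (n * lam)"
    using tele[OF n p b lam, of j "nat (k - j)"] k by (simp add: T_def q_def N_def)
  also have "\<dots> \<le> N * (T / (1 - q)) * (vol n (Bk n j) powr lam / q)"
    using sig_vol[OF n lam, of j] N D unfolding q_def by (intro mult_left_mono mult_nonneg_nonneg) auto
  also have "\<dots> = T / (1 - q) / q * vol n (Bk n j) powr lam * N" by simp
  finally show ?thesis by (simp add: T_def q_def N_def)
qed

theorem lemma2p1:
  fixes n :: nat and p :: "nat \<Rightarrow> real" and lam :: real
  assumes "n \<ge> 1"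
    and "\<forall>i<n. 1 < p i"
    and "- (1 / real n) * (\<Sum>i<n. 1 / p i) < lam" and "lam < 0"
  shows "\<exists>C>0. \<forall>b \<in> campanato n p lam. \<forall>j k :: int. \<forall>y \<in> Rn n.
           \<bar>b y - avg n b (Bk n k)\<bar> \<le> \<bar>b y - avg n b (Bk n j)\<bar>
             + C * max (vol n (Bk n k) powr lam) (vol n (Bk n j) powr lam)
                 * enn2real (campanato_norm n p lam b)"
proof -
  note n = assms(1) and p = assms(2) and lam = assms(4)
  define C where "C = ((2 * sqrt n)^n * (4 / sqrt n) powr (n * lam)) / (1 - 2 powr (n * lam)) / 2 powr (n * lam)"
  have q1: "(2::real) powr (n * lam) < 1" using q_lt1[OF n lam] .
  have Cpos: "0 < C" unfolding C_def using q1 n by simp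
  show ?thesis
  proof (intro exI[of _ C] conjI ballI allI)
    show "0 < C" by (rule Cpos)
  next
    fix b y and j k :: int
    assume b: "b \<in> campanato n p lam" and y: "y \<in> Rn n"
    define N where "N = enn2real (campanato_norm n p lam b)"
    have N: "0 \<le> N" unfolding N_def by simp
    define M where "M = max (vol n (Bk n k) powr lam) (vol n (Bk n j) powr lam)"
    have "\<bar>avg n b (Bk n j) - avg n b (Bk n k)\<bar> \<le> C * M * N"
    proof (cases "j \<le> k")
      case True
      have "\<bar>avg n b (Bk n j) - avg n b (Bk n k)\<bar> \<le> C * vol n (Bk n j) powr lam * N"
        using diff_bound[OF n p b lam True] by (simp add: C_def N_def)
      also have "\<dots> \<le> C * M * N" using Cpos N by (intro mult_right_mono mult_left_mono) (auto simp: M_def)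
      finally show ?thesis .
    next
      case False
      then have kj: "k \<le> j" by simp
      have "\<bar>avg n b (Bk n j) - avg n b (Bk n k)\<bar> = \<bar>avg n b (Bk n k) - avg n b (Bk n j)\<bar>" by simp
      also have "\<dots> \<le> C * vol n (Bk n k) powr lam * N"
        using diff_bound[OF n p b lam kj] by (simp add: C_def N_def)
      also have "\<dots> \<le> C * M * N" using Cpos N by (intro mult_right_mono mult_left_mono) (auto simp: M_def)
      finally show ?thesis .
    qed
    then show "\<bar>b y - avg n b (Bk n k)\<bar> \<le> \<bar>b y - avg n b (Bk n j)\<bar>
             + C * max (vol n (Bk n k) powr lam) (vol n (Bk n j) powr lam)
                 * enn2real (campanato_norm n p lam b)"
      unfolding M_def N_def by linarith
  qed
qed


end
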